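(* For the hypergeometric weights described in the context and every $n\ge2$, the associated $\tau$-function satisfies $\tau^1_n=\vartheta\tau_n$.
   Context: Weights on $\mathbb N_0$: $w^{(a)}(k)=\frac{(b^{(a)}_1)_k\cdots(b^{(a)}_{M^{(a)}})_k}{(c_1)_k\cdots(c_N)_k}\frac{(\eta^{(a)})^k}{k!}$, $a\in\{1,2\}$, with parameters such that all series converge. The moment matrix $\mathscr M$ (indices from 0) has entries $\mathscr M_{n,2m}=\sum_k k^{n+m}w^{(1)}(k)$, $\mathscr M_{n,2m+1}=\sum_k k^{n+m}w^{(2)}(k)$, as functions of $(\eta^{(1)},\eta^{(2)})$. $\tau_n$ is the determinant of the leading principal $n\times n$ submatrix $\mathscr M^{[n]}$ (rows and columns $0,\dots,n-1$). The associated $\tau$-function $\tau^1_n$ is the determinant of the $n\times n$ matrix obtained from $\mathscr M^{[n]}$ by removing its row $(\mathscr M_{n-1,0},\dots,\mathscr M_{n-1,n-1})$ and appending as last row $(\mathscr M_{n,0},\dots,\mathscr M_{n,n-1})$. $\vartheta=\eta^{(1)}\partial/\partial\eta^{(1)}+\eta^{(2)}\partial/\partial\eta^{(2)}$. *)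

theory Defs
  imports "HOL-Analysis.Derivative" "Jordan_Normal_Form.Determinant"
begin

definition hw :: "real list \<Rightarrow> real list \<Rightarrow> real \<Rightarrow> nat \<Rightarrow> real" where
  "hw bs cs \<eta> k =
     (\<Prod>b\<leftarrow>bs. pochhammer b k) / (\<Prod>c\<leftarrow>cs. pochhammer c k) * \<eta> ^ k / fact k"

definition moment ::
  "real list \<Rightarrow> real list \<Rightarrow> real list \<Rightarrow> real \<Rightarrow> real \<Rightarrow> nat \<Rightarrow> nat \<Rightarrow> real" where
  "moment b1 b2 cs \<eta>1 \<eta>2 n j =
     (if even j then (\<Sum>k. real k ^ (n + j div 2) * hw b1 cs \<eta>1 k)
      else (\<Sum>k. real k ^ (n + j div 2) * hw b2 cs \<eta>2 k))"

definition tau :: "real list \<Rightarrow> real list \<Rightarrow> real list \<Rightarrow> nat \<Rightarrow> real \<Rightarrow> real \<Rightarrow> real" where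
  "tau b1 b2 cs n \<eta>1 \<eta>2 = det (mat n n (\<lambda>(i, j). moment b1 b2 cs \<eta>1 \<eta>2 i j))"

definition tau1 :: "real list \<Rightarrow> real list \<Rightarrow> real list \<Rightarrow> nat \<Rightarrow> real \<Rightarrow> real \<Rightarrow> real" where
  "tau1 b1 b2 cs n \<eta>1 \<eta>2 =
     det (mat n n (\<lambda>(i, j). moment b1 b2 cs \<eta>1 \<eta>2 (if i = n - 1 then n else i) j))"

definition euler_op :: "(real \<Rightarrow> real \<Rightarrow> real) \<Rightarrow> real \<Rightarrow> real \<Rightarrow> real" where
  "euler_op F \<eta>1 \<eta>2 =
     \<eta>1 * deriv (\<lambda>x. F x \<eta>2) \<eta>1 + \<eta>2 * deriv (\<lambda>y. F \<eta>1 y) \<eta>2"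

end

theory Submission
  imports Defs
begin

lemma hw_eq: "hw b cs x k = hw b cs 1 k * x ^ k"
  unfolding hw_def by simp

lemma ps_deriv:
  fixes a :: "nat \<Rightarrow> real"
  assumes conv: "\<forall>j::nat. \<forall>x. \<bar>x\<bar> < r \<longrightarrow> summable (\<lambda>k. real k ^ j * (a k * x ^ k))"
    and eta: "\<bar>\<eta>\<bar> < r"
  shows "\<exists>D. ((\<lambda>x. \<Sum>k. real k ^ j * (a k * x ^ k)) has_real_derivative D) (at \<eta>)
            \<and> \<eta> * D = (\<Sum>k. real k ^ Suc j * (a k * \<eta> ^ k))"
proof -
  define c where "c k = real k ^ j * a k" for k
  have conv': "\<forall>x. norm x < r \<longrightarrow> summable (\<lambda>k. c k * x ^ k)"
    using conv by (simp add: c_def mult.assoc)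
  define K where "K = (\<bar>\<eta>\<bar> + r) / 2"
  have K1: "\<bar>\<eta>\<bar> < \<bar>K\<bar>" "\<bar>K\<bar> < r" using eta by (auto simp: K_def)
  have smK: "summable (\<lambda>k. c k * K ^ k)" using conv' K1 by auto
  have d: "((\<lambda>x. \<Sum>k. c k * x ^ k) has_real_derivative (\<Sum>k. diffs c k * \<eta> ^ k)) (at \<eta>)"
    by (rule termdiffs_strong[OF smK]) (use K1 in auto)
  have fe: "(\<lambda>x. \<Sum>k. c k * x ^ k) = (\<lambda>x. \<Sum>k. real k ^ j * (a k * x ^ k))"
    by (simp add: c_def mult.assoc)
  have sd: "summable (\<lambda>k. diffs c k * \<eta> ^ k)"
    by (rule termdiff_converges[of _ r]) (use eta conv' in auto)
  define g where "g k = real k ^ Suc j * (a k * \<eta> ^ k)" for k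
  have sg: "summable g" using conv eta unfolding g_def by blast
  have "(\<Sum>k. g (Suc k)) = suminf g - g 0" by (rule suminf_split_head[OF sg])
  moreover have "g 0 = 0" by (simp add: g_def)
  moreover have "(\<lambda>k. g (Suc k)) = (\<lambda>k. \<eta> * (diffs c k * \<eta> ^ k))"
    by (auto simp: g_def diffs_def c_def algebra_simps)
  moreover have "(\<Sum>k. \<eta> * (diffs c k * \<eta> ^ k)) = \<eta> * (\<Sum>k. diffs c k * \<eta> ^ k)"
    by (rule suminf_mult[OF sd])
  ultimately have "\<eta> * (\<Sum>k. diffs c k * \<eta> ^ k) = suminf g" by simp
  moreover have "g = (\<lambda>k. real k ^ Suc j * (a k * \<eta> ^ k))" by (rule ext) (simp add: g_def)
  ultimately show ?thesis using d fe by auto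
qed

lemma det_mat_expand:
  "det (mat n n (\<lambda>(i,j). f i j)) =
     (\<Sum>p\<in>{p. p permutes {0..<n}}. signof p * (\<Prod>i=0..<n. f i (p i)))"
proof -
  have "det (mat n n (\<lambda>(i,j). f i j)) =
     (\<Sum>p\<in>{p. p permutes {0..<n}}. signof p * (\<Prod>i=0..<n. mat n n (\<lambda>(i,j). f i j) $$ (i, p i)))"
    by (rule det_def') simp
  also have "\<dots> = (\<Sum>p\<in>{p. p permutes {0..<n}}. signof p * (\<Prod>i=0..<n. f i (p i)))"
  proof (rule sum.cong[OF refl])
    fix p assume "p \<in> {p. p permutes {0..<n}}"
    then have "\<And>i. i < n \<Longrightarrow> p i < n" using permutes_in_image by fastforce
    then show "signof p * (\<Prod>i=0..<n. mat n n (\<lambda>(i,j). f i j) $$ (i, p i)) =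
               signof p * (\<Prod>i=0..<n. f i (p i))" by (auto intro!: prod.cong)
  qed
  finally show ?thesis .
qed

lemma det_mat_deriv:
  assumes "\<And>i j. ((\<lambda>x. f x i j) has_real_derivative f' i j) (at z)"
  shows "((\<lambda>x. det (mat n n (\<lambda>(i,j). f x i j))) has_real_derivative
     (\<Sum>p\<in>{p. p permutes {0..<n}}. signof p * (\<Sum>i\<in>{0..<n}. f' i (p i) * (\<Prod>k\<in>{0..<n}-{i}. f z k (p k))))) (at z)"
proof -
  have e: "(\<lambda>x. det (mat n n (\<lambda>(i,j). f x i j))) =
     (\<lambda>x. \<Sum>p\<in>{p. p permutes {0..<n}}. signof p * (\<Prod>i\<in>{0..<n}. f x i (p i)))"
    by (simp add: det_mat_expand)
  show ?thesis unfolding e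
    by (intro DERIV_sum DERIV_cmult has_field_derivative_prod assms)
qed

lemma det_row_replace:
  assumes "i < n"
  shows "det (mat n n (\<lambda>(r,j). if r = i then h j else g r j)) =
    (\<Sum>p\<in>{p. p permutes {0..<n}}. signof p * (h (p i) * (\<Prod>k\<in>{0..<n}-{i}. g k (p k))))"
proof -
  have "det (mat n n (\<lambda>(r,j). if r = i then h j else g r j)) =
     (\<Sum>p\<in>{p. p permutes {0..<n}}. signof p * (\<Prod>r=0..<n. if r = i then h (p r) else g r (p r)))"
    using det_mat_expand[of n "\<lambda>r j. if r = i then h j else g r j"] by simp
  also have "\<dots> = (\<Sum>p\<in>{p. p permutes {0..<n}}. signof p * (h (p i) * (\<Prod>k\<in>{0..<n}-{i}. g k (p k))))"
  proof (rule sum.cong[OF refl])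
    fix p
    have "(\<Prod>r=0..<n. if r = i then h (p r) else g r (p r)) =
          (if i = i then h (p i) else g i (p i)) * (\<Prod>r\<in>{0..<n}-{i}. if r = i then h (p r) else g r (p r))"
      by (rule prod.remove) (use assms in auto)
    also have "\<dots> = h (p i) * (\<Prod>k\<in>{0..<n}-{i}. g k (p k))"
    proof -
      have "(\<Prod>r\<in>{0..<n}-{i}. if r = i then h (p r) else g r (p r)) = (\<Prod>k\<in>{0..<n}-{i}. g k (p k))"
        by (rule prod.cong) auto
      then show ?thesis by simp
    qed
    finally show "signof p * (\<Prod>r=0..<n. if r = i then h (p r) else g r (p r)) =
       signof p * (h (p i) * (\<Prod>k\<in>{0..<n}-{i}. g k (p k)))" by simp
  qed
  finally show ?thesis .
qed

lemma det_dup_row: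
  assumes "Suc i < n"
  shows "det (mat n n (\<lambda>(r,j). if r = i then g (Suc i) j else g r j)) = 0"
proof (rule det_identical_rows[of _ n i "Suc i"])
  show "row (mat n n (\<lambda>(r,j). if r = i then g (Suc i) j else g r j)) i =
        row (mat n n (\<lambda>(r,j). if r = i then g (Suc i) j else g r j)) (Suc i)"
    by (rule eq_vecI) (use assms in auto)
qed (use assms in auto)


theorem mainTheorem9:
  fixes b1 b2 cs :: "real list" and r1 r2 \<eta>1 \<eta>2 :: real and n :: nat
  assumes cs_ok: "\<forall>c\<in>set cs. \<forall>m::nat. c \<noteq> - real m"
    and conv1: "\<forall>j::nat. \<forall>x. \<bar>x\<bar> < r1 \<longrightarrow> summable (\<lambda>k. real k ^ j * hw b1 cs x k)"
    and conv2: "\<forall>j::nat. \<forall>x. \<bar>x\<bar> < r2 \<longrightarrow> summable (\<lambda>k. real k ^ j * hw b2 cs x k)"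
    and in1: "\<bar>\<eta>1\<bar> < r1" and in2: "\<bar>\<eta>2\<bar> < r2"
    and n: "n \<ge> 2"

  shows "tau1 b1 b2 cs n \<eta>1 \<eta>2 = euler_op (tau b1 b2 cs n) \<eta>1 \<eta>2"
proof -
  define M where "M x y i j = moment b1 b2 cs x y i j" for x y i j
  define Q where "Q i j d1 d2 \<longleftrightarrow> ((\<lambda>x. M x \<eta>2 i j) has_real_derivative d1) (at \<eta>1)
     \<and> ((\<lambda>y. M \<eta>1 y i j) has_real_derivative d2) (at \<eta>2)
     \<and> \<eta>1 * d1 + \<eta>2 * d2 = M \<eta>1 \<eta>2 (Suc i) j" for i j d1 d2
  define a1 where "a1 k = hw b1 cs 1 k" for k
  define a2 where "a2 k = hw b2 cs 1 k" for k
  have h1: "(\<lambda>k. real k ^ j * hw b1 cs x k) = (\<lambda>k. real k ^ j * (a1 k * x ^ k))" for j x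
    by (rule ext) (simp add: hw_eq[of b1 cs x] a1_def)
  have h2: "(\<lambda>k. real k ^ j * hw b2 cs x k) = (\<lambda>k. real k ^ j * (a2 k * x ^ k))" for j x
    by (rule ext) (simp add: hw_eq[of b2 cs x] a2_def)
  have c1: "\<forall>j::nat. \<forall>x. \<bar>x\<bar> < r1 \<longrightarrow> summable (\<lambda>k. real k ^ j * (a1 k * x ^ k))"
    using conv1 unfolding h1 .
  have c2: "\<forall>j::nat. \<forall>x. \<bar>x\<bar> < r2 \<longrightarrow> summable (\<lambda>k. real k ^ j * (a2 k * x ^ k))"
    using conv2 unfolding h2 .
  have Mev: "even j \<Longrightarrow> M x y i j = (\<Sum>k. real k ^ (i + j div 2) * (a1 k * x ^ k))" for x y i j
    by (simp add: M_def moment_def h1)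
  have Mod: "odd j \<Longrightarrow> M x y i j = (\<Sum>k. real k ^ (i + j div 2) * (a2 k * y ^ k))" for x y i j
    by (simp add: M_def moment_def h2)
  have ex: "\<exists>d. Q i j (fst d) (snd d)" for i j
  proof (cases "even j")
    case True
    obtain D where D: "((\<lambda>x. \<Sum>k. real k ^ (i + j div 2) * (a1 k * x ^ k)) has_real_derivative D) (at \<eta>1)"
      "\<eta>1 * D = (\<Sum>k. real k ^ Suc (i + j div 2) * (a1 k * \<eta>1 ^ k))"
      using ps_deriv[OF c1 in1] by blast
    have "Q i j D 0" unfolding Q_def
    proof (intro conjI)
      show "((\<lambda>x. M x \<eta>2 i j) has_real_derivative D) (at \<eta>1)"
        using D(1) True by (simp add: Mev)
      show "((\<lambda>y. M \<eta>1 y i j) has_real_derivative 0) (at \<eta>2)"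
        using True by (simp add: Mev)
      show "\<eta>1 * D + \<eta>2 * 0 = M \<eta>1 \<eta>2 (Suc i) j"
        using D(2) True by (simp add: Mev)
    qed
    then show ?thesis by (intro exI[of _ "(D, 0)"]) simp
  next
    case False
    obtain D where D: "((\<lambda>x. \<Sum>k. real k ^ (i + j div 2) * (a2 k * x ^ k)) has_real_derivative D) (at \<eta>2)"
      "\<eta>2 * D = (\<Sum>k. real k ^ Suc (i + j div 2) * (a2 k * \<eta>2 ^ k))"
      using ps_deriv[OF c2 in2] by blast
    have "Q i j 0 D" unfolding Q_def
    proof (intro conjI)
      show "((\<lambda>y. M \<eta>1 y i j) has_real_derivative D) (at \<eta>2)"
        using D(1) False by (simp add: Mod)
      show "((\<lambda>x. M x \<eta>2 i j) has_real_derivative 0) (at \<eta>1)"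
        using False by (simp add: Mod)
      show "\<eta>1 * 0 + \<eta>2 * D = M \<eta>1 \<eta>2 (Suc i) j"
        using D(2) False by (simp add: Mod)
    qed
    then show ?thesis by (intro exI[of _ "(0, D)"]) simp
  qed
  define DD where "DD i j = (SOME d. Q i j (fst d) (snd d))" for i j
  define D1 where "D1 i j = fst (DD i j)" for i j
  define D2 where "D2 i j = snd (DD i j)" for i j
  have QD: "Q i j (D1 i j) (D2 i j)" for i j
    unfolding D1_def D2_def DD_def by (rule someI_ex[OF ex])
  let ?P = "{p. p permutes {0..<n}}"
  define S1 where "S1 = (\<Sum>p\<in>?P. signof p * (\<Sum>i\<in>{0..<n}. D1 i (p i) * (\<Prod>k\<in>{0..<n}-{i}. M \<eta>1 \<eta>2 k (p k))))"
  define S2 where "S2 = (\<Sum>p\<in>?P. signof p * (\<Sum>i\<in>{0..<n}. D2 i (p i) * (\<Prod>k\<in>{0..<n}-{i}. M \<eta>1 \<eta>2 k (p k))))"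
  have t1: "(\<lambda>x. tau b1 b2 cs n x \<eta>2) = (\<lambda>x. det (mat n n (\<lambda>(i,j). (\<lambda>x i j. M x \<eta>2 i j) x i j)))"
    by (simp add: tau_def M_def)
  have t2: "(\<lambda>y. tau b1 b2 cs n \<eta>1 y) = (\<lambda>y. det (mat n n (\<lambda>(i,j). (\<lambda>y i j. M \<eta>1 y i j) y i j)))"
    by (simp add: tau_def M_def)
  have "((\<lambda>x. tau b1 b2 cs n x \<eta>2) has_real_derivative S1) (at \<eta>1)"
    unfolding t1 S1_def
    by (rule det_mat_deriv) (use QD in \<open>simp add: Q_def\<close>)
  then have d1: "deriv (\<lambda>x. tau b1 b2 cs n x \<eta>2) \<eta>1 = S1" by (rule DERIV_imp_deriv)
  have "((\<lambda>y. tau b1 b2 cs n \<eta>1 y) has_real_derivative S2) (at \<eta>2)"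
    unfolding t2 S2_def
    by (rule det_mat_deriv) (use QD in \<open>simp add: Q_def\<close>)
  then have d2: "deriv (\<lambda>y. tau b1 b2 cs n \<eta>1 y) \<eta>2 = S2" by (rule DERIV_imp_deriv)
  define Mx where "Mx = M \<eta>1 \<eta>2"
  have "euler_op (tau b1 b2 cs n) \<eta>1 \<eta>2 = \<eta>1 * S1 + \<eta>2 * S2"
    by (simp add: euler_op_def d1 d2)
  also have "\<dots> = (\<Sum>p\<in>?P. signof p * (\<Sum>i\<in>{0..<n}. (\<eta>1 * D1 i (p i) + \<eta>2 * D2 i (p i)) * (\<Prod>k\<in>{0..<n}-{i}. Mx k (p k))))"
    unfolding S1_def S2_def sum_distrib_left sum.distrib[symmetric] Mx_def
    by (rule sum.cong[OF refl]) (simp add: sum_distrib_left sum.distrib[symmetric] algebra_simps)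
  also have "\<dots> = (\<Sum>p\<in>?P. signof p * (\<Sum>i\<in>{0..<n}. Mx (Suc i) (p i) * (\<Prod>k\<in>{0..<n}-{i}. Mx k (p k))))"
    using QD by (simp add: Q_def Mx_def)
  also have "\<dots> = (\<Sum>i\<in>{0..<n}. \<Sum>p\<in>?P. signof p * (Mx (Suc i) (p i) * (\<Prod>k\<in>{0..<n}-{i}. Mx k (p k))))"
    by (simp add: sum_distrib_left sum.swap[of _ ?P])
  also have "\<dots> = (\<Sum>i\<in>{0..<n}. det (mat n n (\<lambda>(r,j). if r = i then Mx (Suc i) j else Mx r j)))"
    by (rule sum.cong[OF refl]) (simp add: det_row_replace)
  also have "\<dots> = det (mat n n (\<lambda>(r,j). if r = n - 1 then Mx n j else Mx r j))"
  proof -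
    obtain m where nm: "n = Suc m" using n by (cases n) auto
    have m1: "n - 1 = m" using nm by simp
    have e: "{0..<n} = insert m {0..<m}" using nm by auto
    have z: "(\<Sum>i\<in>{0..<m}. det (mat n n (\<lambda>(r,j). if r = i then Mx (Suc i) j else Mx r j))) = 0"
      by (rule sum.neutral) (use nm in \<open>auto intro!: det_dup_row\<close>)
    have "(\<Sum>i\<in>{0..<n}. det (mat n n (\<lambda>(r,j). if r = i then Mx (Suc i) j else Mx r j)))
       = det (mat n n (\<lambda>(r,j). if r = m then Mx (Suc m) j else Mx r j))
         + (\<Sum>i\<in>{0..<m}. det (mat n n (\<lambda>(r,j). if r = i then Mx (Suc i) j else Mx r j)))"
      unfolding e by (rule sum.insert) auto
    then show ?thesis unfolding m1 z nm[symmetric] by simp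
  qed
  also have "\<dots> = tau1 b1 b2 cs n \<eta>1 \<eta>2"
  proof -
    have "(\<lambda>(r,j). if r = n - 1 then Mx n j else Mx r j) =
          (\<lambda>(r,j). moment b1 b2 cs \<eta>1 \<eta>2 (if r = n - 1 then n else r) j)"
      using n by (auto simp: Mx_def M_def)
    then show ?thesis by (simp add: tau1_def)
  qed
  finally show ?thesis by simp
qed

end
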